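(* Let $\alpha\in(0,\pi/2]$ and let $(L,\theta)$ be a minimizer of problem $(\mathcal{P}_\alpha)$ whose curvature at both endpoints satisfies $\theta'(0)\le1$ and $\theta'(L)\le1$ (as is the case when the arc is externally tangent to the unit disk at its endpoints). Then $\theta'(0)=\theta'(L)$, $$\tfrac12\,\theta'(s)^2=\frac{1}{2\sin^2\alpha}\left(\int_0^\alpha\sqrt{\cos t}\,dt\right)^2\cos(\theta(s)-\alpha)\quad\text{for all } s\in[0,L],$$ and the minimal energy is $$E(\alpha):=\frac12\int_0^L\theta'(s)^2\,ds=\frac{1}{\sin\alpha}\left(\int_0^\alpha\sqrt{\cos t}\,dt\right)^2.$$
   Context: For $\alpha\in(0,\pi/2]$ and $L>0$, let $\mathcal{M}_{\alpha,L}$ be the set of $\theta\in H^1(0,L)$ with $\theta'\ge 0$ a.e., $\theta(0)=0$, $\theta(L)=2\alpha$, $\int_0^L\cos\theta(u)\,du=\sin2\alpha$ and $\int_0^L\sin\theta(u)\,du=1-\cos2\alpha$ ($\theta$ is the tangent angle of a convex arc parametrized by arc length from $(0,-1)$ to $(\sin2\alpha,-\cos2\alpha)$, and $\theta'$ is its curvature). Problem $(\mathcal{P}_\alpha)$ is to minimize $\frac12\int_0^L\theta'(s)^2\,ds$ over all $L>0$ and $\theta\in\mathcal{M}_{\alpha,L}$. *)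

theory Defs
  imports "HOL-Analysis.Analysis"
begin

text \<open>H^1(0,L) with weak derivative g: theta is the primitive of a square-integrable g.\<close>
definition H1_with_deriv :: "real \<Rightarrow> (real \<Rightarrow> real) \<Rightarrow> (real \<Rightarrow> real) \<Rightarrow> bool" where
  "H1_with_deriv L \<theta> g \<longleftrightarrow>
     g \<in> borel_measurable lborel \<and>
     set_integrable lborel {0..L} g \<and>
     set_integrable lborel {0..L} (\<lambda>t. (g t)\<^sup>2) \<and>
     (\<forall>x\<in>{0..L}. \<theta> x = \<theta> 0 + (LBINT t=0..x. g t))"

definition admissible :: "real \<Rightarrow> real \<Rightarrow> (real \<Rightarrow> real) \<Rightarrow> (real \<Rightarrow> real) \<Rightarrow> bool" where
  "admissible \<alpha> L \<theta> g \<longleftrightarrow>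
     H1_with_deriv L \<theta> g \<and>
     (AE t in lborel. t \<in> {0..L} \<longrightarrow> g t \<ge> 0) \<and>
     \<theta> 0 = 0 \<and> \<theta> L = 2 * \<alpha> \<and>
     (LBINT u=0..L. cos (\<theta> u)) = sin (2 * \<alpha>) \<and>
     (LBINT u=0..L. sin (\<theta> u)) = 1 - cos (2 * \<alpha>)"

definition energy :: "real \<Rightarrow> (real \<Rightarrow> real) \<Rightarrow> real" where
  "energy L g = (1/2) * (LBINT s=0..L. (g s)\<^sup>2)"

definition is_minimizer :: "real \<Rightarrow> real \<Rightarrow> (real \<Rightarrow> real) \<Rightarrow> bool" where
  "is_minimizer \<alpha> L \<theta> \<longleftrightarrow> L > 0 \<and>
     (\<exists>g. admissible \<alpha> L \<theta> g \<and>
        (\<forall>L' \<theta>' g'. L' > 0 \<and> admissible \<alpha> L' \<theta>' g' \<longrightarrow> energy L g \<le> energy L' g'))"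

end

theory Submission
  imports Defs
begin


lemma chain_H:
  fixes g \<theta> w :: "real \<Rightarrow> real"
  assumes L: "0 \<le> L" and gi: "g integrable_on {0..L}" and gnn: "\<And>t. t \<in> {0..L} \<Longrightarrow> 0 \<le> g t"
    and th: "\<And>x. x \<in> {0..L} \<Longrightarrow> \<theta> x = \<theta> 0 + integral {0..x} g"
    and w: "continuous_on UNIV w"
  shows "(\<lambda>s. w (\<theta> s) * g s) integrable_on {0..L}"
    "integral {0..L} (\<lambda>s. w (\<theta> s) * g s) = integral {\<theta> 0..\<theta> L} w"
proof -
  have gsub: "g integrable_on {x..y}" if "0 \<le> x" "y \<le> L" for x y
    using integrable_on_subinterval[OF gi] that by auto
  have thcont: "continuous_on {0..L} \<theta>"
  proof -
    have "continuous_on {0..L} (\<lambda>x. \<theta> 0 + integral {0..x} g)"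
      by (intro continuous_intros indefinite_integral_continuous_1 gi)
    then show ?thesis by (rule continuous_on_eq) (metis th)
  qed
  have thdiff: "\<theta> y - \<theta> x = integral {x..y} g" if "0 \<le> x" "x \<le> y" "y \<le> L" for x y
  proof -
    have "integral {0..x} g + integral {x..y} g = integral {0..y} g"
      by (rule Henstock_Kurzweil_Integration.integral_combine) (use that gsub in auto)
    moreover have "\<theta> x = \<theta> 0 + integral {0..x} g" "\<theta> y = \<theta> 0 + integral {0..y} g"
      by (intro th; use that in auto)+
    ultimately show ?thesis by linarith
  qed
  have mono: "\<theta> x \<le> \<theta> y" if "0 \<le> x" "x \<le> y" "y \<le> L" for x y
  proof -
    have "0 \<le> integral {x..y} g" using that gsub gnn by (intro integral_nonneg) auto
    then show ?thesis using thdiff[OF that] by simp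
  qed
  define q where "q = (\<lambda>s. w (\<theta> s))"
  have qcont: "continuous_on {0..L} q"
    unfolding q_def by (rule continuous_on_compose2[OF w thcont]) auto
  have qgi: "(\<lambda>s. q s * g s) integrable_on {0..L}"
  proof -
    have "(\<lambda>s. q s * g s) absolutely_integrable_on {0..L}"
    proof (rule absolutely_integrable_bounded_measurable_product_real)
      show "q \<in> borel_measurable (lebesgue_on {0..L})"
        by (rule continuous_imp_measurable_on_sets_lebesgue[OF qcont]) auto
      show "bounded (q ` {0..L})"
        by (rule compact_imp_bounded, rule compact_continuous_image[OF qcont]) auto
      show "g absolutely_integrable_on {0..L}"
        by (rule nonnegative_absolutely_integrable_1[OF gi gnn])
    qed auto
    then show ?thesis using set_lebesgue_integral_eq_integral(1) by blast
  qed
  then show "(\<lambda>s. w (\<theta> s) * g s) integrable_on {0..L}" by (simp add: q_def)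
  have qgsub: "(\<lambda>s. q s * g s) integrable_on {x..y}" if "0 \<le> x" "y \<le> L" for x y
    using integrable_on_subinterval[OF qgi] that by auto
  have wi: "w integrable_on {a..b}" for a b
    by (rule integrable_continuous_real, rule continuous_on_subset[OF w]) auto
  define F where "F x = integral {0..x} (\<lambda>s. q s * g s)" for x
  define G where "G x = integral {\<theta> 0..\<theta> x} w" for x
  define D where "D = \<theta> L - \<theta> 0"
  have D0: "0 \<le> D" using mono[of 0 L] L by (simp add: D_def)
  have piece: "\<exists>\<delta>>0. \<forall>x y. 0 \<le> x \<and> x \<le> y \<and> y \<le> L \<and> \<theta> y - \<theta> x < \<delta> \<longrightarrow>
      \<bar>(F y - G y) - (F x - G x)\<bar> \<le> 2 * e * (\<theta> y - \<theta> x)" if e: "e > 0" for e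
  proof -
    have "uniformly_continuous_on {\<theta> 0..\<theta> L} w"
      by (rule compact_uniformly_continuous, rule continuous_on_subset[OF w]) auto
    then obtain \<delta> where dpos: "\<delta> > 0" and dw: "\<And>a b. a \<in> {\<theta> 0..\<theta> L} \<Longrightarrow> b \<in> {\<theta> 0..\<theta> L}
        \<Longrightarrow> dist b a < \<delta> \<Longrightarrow> dist (w b) (w a) < e"
      unfolding uniformly_continuous_on_def using e by metis
    show ?thesis
    proof (intro exI[of _ \<delta>] conjI allI impI dpos)
      fix x y assume xy: "0 \<le> x \<and> x \<le> y \<and> y \<le> L \<and> \<theta> y - \<theta> x < \<delta>"
      have txy: "\<theta> 0 \<le> \<theta> x" "\<theta> x \<le> \<theta> y" "\<theta> y \<le> \<theta> L"
        using mono xy by auto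
      have Fd: "F y - F x = integral {x..y} (\<lambda>s. q s * g s)"
      proof -
        have "F x + integral {x..y} (\<lambda>s. q s * g s) = F y"
          unfolding F_def
          by (rule Henstock_Kurzweil_Integration.integral_combine) (use xy qgsub in auto)
        then show ?thesis by simp
      qed
      have Gd: "G y - G x = integral {\<theta> x..\<theta> y} w"
      proof -
        have "G x + integral {\<theta> x..\<theta> y} w = G y"
          unfolding G_def
          by (rule Henstock_Kurzweil_Integration.integral_combine) (use txy wi in auto)
        then show ?thesis by simp
      qed
      define p where "p = w (\<theta> x)"
      have gxy: "integral {x..y} g = \<theta> y - \<theta> x" using thdiff xy by simp
      have A1: "integral {x..y} (\<lambda>s. q s * g s) - p * (\<theta> y - \<theta> x)
          = integral {x..y} (\<lambda>s. (q s - p) * g s)"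
      proof -
        have "integral {x..y} (\<lambda>s. (q s - p) * g s) = integral {x..y} (\<lambda>s. q s * g s - p * g s)"
          by (simp add: algebra_simps)
        also have "\<dots> = integral {x..y} (\<lambda>s. q s * g s) - integral {x..y} (\<lambda>s. p * g s)"
          by (rule integral_diff) (use qgsub gsub xy in \<open>auto intro: integrable_on_mult_right\<close>)
        also have "integral {x..y} (\<lambda>s. p * g s) = p * (\<theta> y - \<theta> x)"
          using gxy by simp
        finally show ?thesis by simp
      qed
      have B1: "\<bar>integral {x..y} (\<lambda>s. (q s - p) * g s)\<bar> \<le> e * (\<theta> y - \<theta> x)"
      proof -
        have i1: "(\<lambda>s. (q s - p) * g s) integrable_on {x..y}"
        proof -
          have "(\<lambda>s. q s * g s - p * g s) integrable_on {x..y}"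
            by (intro integrable_diff integrable_on_mult_right) (use qgsub gsub xy in auto)
          then show ?thesis by (simp add: algebra_simps)
        qed
        have "norm (integral {x..y} (\<lambda>s. (q s - p) * g s)) \<le> integral {x..y} (\<lambda>s. e * g s)"
        proof (rule integral_norm_bound_integral[OF i1])
          show "(\<lambda>s. e * g s) integrable_on {x..y}"
            by (intro integrable_on_mult_right) (use gsub xy in auto)
          fix s assume s: "s \<in> {x..y}"
          have ts: "\<theta> x \<le> \<theta> s" "\<theta> s \<le> \<theta> y" using mono s xy by auto
          have "dist (w (\<theta> s)) (w (\<theta> x)) < e"
            by (rule dw) (use ts txy xy in \<open>auto simp: dist_real_def\<close>)
          then have "\<bar>q s - p\<bar> \<le> e" by (simp add: q_def p_def dist_real_def)
          moreover have "0 \<le> g s" using gnn s xy by auto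
          ultimately show "norm ((q s - p) * g s) \<le> e * g s"
            by (simp add: abs_mult mult_right_mono)
        qed
        also have "\<dots> = e * (\<theta> y - \<theta> x)" using gxy by simp
        finally show ?thesis by simp
      qed
      have A2: "integral {\<theta> x..\<theta> y} w - p * (\<theta> y - \<theta> x)
          = integral {\<theta> x..\<theta> y} (\<lambda>t. w t - p)"
      proof -
        have "integral {\<theta> x..\<theta> y} (\<lambda>t. w t - p) = integral {\<theta> x..\<theta> y} w - integral {\<theta> x..\<theta> y} (\<lambda>t. p)"
          by (rule integral_diff[OF wi]) auto
        then show ?thesis using txy by (simp add: mult.commute)
      qed
      have B2: "\<bar>integral {\<theta> x..\<theta> y} (\<lambda>t. w t - p)\<bar> \<le> e * (\<theta> y - \<theta> x)"
      proof -
        have "norm (integral {\<theta> x..\<theta> y} (\<lambda>t. w t - p)) \<le> integral {\<theta> x..\<theta> y} (\<lambda>t. e)"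
        proof (rule integral_norm_bound_integral)
          show "(\<lambda>t. w t - p) integrable_on {\<theta> x..\<theta> y}" by (intro integrable_diff wi) auto
          fix t assume t: "t \<in> {\<theta> x..\<theta> y}"
          have "dist (w t) (w (\<theta> x)) < e"
            by (rule dw) (use t txy xy in \<open>auto simp: dist_real_def\<close>)
          then show "norm (w t - p) \<le> e" by (simp add: p_def dist_real_def)
        qed auto
        also have "\<dots> = e * (\<theta> y - \<theta> x)" using txy by simp
        finally show ?thesis by simp
      qed
      have "(F y - G y) - (F x - G x) = integral {x..y} (\<lambda>s. (q s - p) * g s)
           - integral {\<theta> x..\<theta> y} (\<lambda>t. w t - p)"
        using Fd Gd A1 A2 by (simp add: algebra_simps)
      then show "\<bar>(F y - G y) - (F x - G x)\<bar> \<le> 2 * e * (\<theta> y - \<theta> x)"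
        using B1 B2 by linarith
    qed
  qed
  have bound: "\<bar>F L - G L\<bar> \<le> 2 * e * D" if e: "e > 0" for e
  proof -
    obtain \<delta> where dpos: "\<delta> > 0" and dp: "\<And>x y. 0 \<le> x \<and> x \<le> y \<and> y \<le> L \<and> \<theta> y - \<theta> x < \<delta> \<Longrightarrow>
      \<bar>(F y - G y) - (F x - G x)\<bar> \<le> 2 * e * (\<theta> y - \<theta> x)"
      using piece[OF e] by blast
    have "uniformly_continuous_on {0..L} \<theta>"
      by (rule compact_uniformly_continuous[OF thcont]) auto
    then obtain \<eta> where epos: "\<eta> > 0" and deta: "\<And>a b. a \<in> {0..L} \<Longrightarrow> b \<in> {0..L}
        \<Longrightarrow> dist b a < \<eta> \<Longrightarrow> dist (\<theta> b) (\<theta> a) < \<delta>"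
      unfolding uniformly_continuous_on_def using dpos by metis
    obtain n :: nat where n: "L / \<eta> < n" using reals_Archimedean2 by blast
    have npos: "n > 0" using n L epos
      by (metis divide_nonneg_pos of_nat_0 gr0I not_le)
    have Ln: "L / n < \<eta>" using n epos npos by (simp add: field_simps)
    define x where "x k = real k * L / n" for k
    define \<Phi> where "\<Phi> k = F (x k) - G (x k)" for k
    have xk: "0 \<le> x k" "x k \<le> x (Suc k)" if "k < n" for k
      using L npos that by (auto simp: x_def field_simps)
    have xk2: "x (Suc k) \<le> L" if "k < n" for k
    proof -
      have "real (Suc k) * L \<le> real n * L" using that L by (intro mult_right_mono) auto
      then show ?thesis using npos by (simp add: x_def field_simps)
    qed
    have step: "\<bar>\<Phi> (Suc k) - \<Phi> k\<bar> \<le> 2 * e * (\<theta> (x (Suc k)) - \<theta> (x k))" if k: "k < n" for k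
    proof -
      have "x (Suc k) - x k = L / n"
        by (simp add: x_def add_divide_distrib distrib_right)
      then have "dist (x (Suc k)) (x k) = L / n"
        using L by (simp add: dist_real_def)
      then have "dist (\<theta> (x (Suc k))) (\<theta> (x k)) < \<delta>"
        using deta xk[OF k] xk2[OF k] Ln by auto
      then have "\<theta> (x (Suc k)) - \<theta> (x k) < \<delta>" by (simp add: dist_real_def)
      then show ?thesis unfolding \<Phi>_def using dp xk[OF k] xk2[OF k] by blast
    qed
    have "\<bar>\<Phi> n - \<Phi> 0\<bar> = \<bar>\<Sum>k<n. \<Phi> (Suc k) - \<Phi> k\<bar>"
      by (simp add: sum_lessThan_telescope)
    also have "\<dots> \<le> (\<Sum>k<n. \<bar>\<Phi> (Suc k) - \<Phi> k\<bar>)" by (rule sum_abs)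
    also have "\<dots> \<le> (\<Sum>k<n. 2 * e * (\<theta> (x (Suc k)) - \<theta> (x k)))"
      by (intro sum_mono step) auto
    also have "\<dots> = 2 * e * (\<theta> (x n) - \<theta> (x 0))"
      by (simp add: sum_distrib_left[symmetric] sum_lessThan_telescope[of "\<lambda>k. \<theta> (x k)"])
    finally have "\<bar>\<Phi> n - \<Phi> 0\<bar> \<le> 2 * e * (\<theta> (x n) - \<theta> (x 0))" .
    moreover have "x n = L" "x 0 = 0" using npos by (auto simp: x_def)
    ultimately have "\<bar>\<Phi> n - \<Phi> 0\<bar> \<le> 2 * e * D" by (simp add: D_def)
    moreover have "\<Phi> n = F L - G L" "\<Phi> 0 = 0"
      using npos by (auto simp: \<Phi>_def x_def F_def G_def)
    ultimately show ?thesis by simp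
  qed
  have "F L - G L = 0"
  proof (rule ccontr)
    assume ne: "F L - G L \<noteq> 0"
    define e where "e = \<bar>F L - G L\<bar> / (4 * (D + 1))"
    have epos: "e > 0" using ne D0 by (simp add: e_def)
    have "\<bar>F L - G L\<bar> \<le> 2 * e * D" by (rule bound[OF epos])
    also have "\<dots> < \<bar>F L - G L\<bar>"
      using ne D0 by (simp add: e_def field_simps add_pos_nonneg)
    finally show False by simp
  qed
  then show "integral {0..L} (\<lambda>s. w (\<theta> s) * g s) = integral {\<theta> 0..\<theta> L} w"
    by (simp add: F_def G_def q_def)
qed



lemma cos_shift: "cos (t::real) = cos a * cos (t - a) - sin a * sin (t - a)"
  using cos_add[of "t - a" a] by (simp add: mult.commute)
lemma sin_shift: "sin (t::real) = sin a * cos (t - a) + cos a * sin (t - a)"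
  using sin_add[of "t - a" a] by (simp add: mult.commute add.commute)

lemma competitor_generic:
  fixes P P' T :: "real \<Rightarrow> real" and a b c \<alpha> :: real
  assumes ab: "a < b" and c: "c > 0" and al: "0 < \<alpha>" "\<alpha> \<le> pi/2"
    and Pd: "\<And>u. u \<in> {a..b} \<Longrightarrow> (P has_real_derivative P' u) (at u)"
    and Tc: "continuous_on {a..b} T" and Tp: "\<And>u. u \<in> {a..b} \<Longrightarrow> T u > 0"
    and rel: "\<And>u. u \<in> {a..b} \<Longrightarrow> P' u = c * sqrt (cos (P u)) * T u"
    and cpos: "\<And>u. u \<in> {a<..<b} \<Longrightarrow> cos (P u) > 0"
    and Pa: "P a = -\<alpha>" and Pb: "P b = \<alpha>"
    and Pr: "\<And>u. u \<in> {a..b} \<Longrightarrow> P u \<in> {-\<alpha>..\<alpha>}"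
    and cK: "c = integral {0..2*\<alpha>} (\<lambda>t. sqrt (cos (t - \<alpha>))) / (2 * sin \<alpha>)"
  shows "\<exists>L \<theta> g. L > 0 \<and> admissible \<alpha> L \<theta> g \<and>
           energy L g = c * integral {0..2*\<alpha>} (\<lambda>t. sqrt (cos (t - \<alpha>))) / 2"
proof -
  define S where "S u = integral {a..u} T" for u
  have Sd: "(S has_real_derivative T u) (at u within {a..b})" if "u \<in> {a..b}" for u
    unfolding S_def by (rule integral_has_real_derivative[OF Tc that])
  have Sc: "continuous_on {a..b} S" using Sd by (rule DERIV_continuous_on)
  have Ti: "T integrable_on {x..y}" if "a \<le> x" "y \<le> b" for x y
    by (rule integrable_continuous_real, rule continuous_on_subset[OF Tc]) (use that in auto)
  have Sinc: "S x < S y" if "a \<le> x" "x < y" "y \<le> b" for x y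
  proof -
    have "S x + integral {x..y} T = S y"
      unfolding S_def by (rule Henstock_Kurzweil_Integration.integral_combine) (use that Ti in auto)
    moreover have "continuous_on {x..y} T" by (rule continuous_on_subset[OF Tc]) (use that in auto)
    then have "\<exists>z\<in>{x..y}. \<forall>t\<in>{x..y}. T z \<le> T t"
      by (intro continuous_attains_inf) (use that in auto)
    then obtain z where z: "z \<in> {x..y}" "\<And>t. t \<in> {x..y} \<Longrightarrow> T z \<le> T t"
      by blast
    have "integral {x..y} (\<lambda>t. T z) \<le> integral {x..y} T"
      by (rule integral_le) (use z Ti that in auto)
    moreover have "integral {x..y} (\<lambda>t. T z) = (y - x) * T z" using that by simp
    moreover have "0 < (y - x) * T z" using Tp z that by auto
    ultimately show ?thesis by linarith
  qed
  have Smono: "S x \<le> S y" if "a \<le> x" "x \<le> y" "y \<le> b" for x y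
    using Sinc[of x y] that by (cases "x = y") auto
  have S0: "S a = 0" by (simp add: S_def)
  define L where "L = S b"
  have Lpos: "L > 0" using Sinc[of a b] ab S0 by (simp add: L_def)
  have Sex: "\<exists>!u. u \<in> {a..b} \<and> S u = s" if s: "s \<in> {0..L}" for s
  proof -
    obtain u where "a \<le> u" "u \<le> b" "S u = s"
      using IVT'[of S a s b] s Sc ab S0 by (auto simp: L_def)
    moreover have "v = u" if "v \<in> {a..b}" "S v = s" "u \<in> {a..b}" "S u = s" for v u
      using Sinc[of u v] Sinc[of v u] that by (cases u v rule: linorder_cases) auto
    ultimately show ?thesis by (intro ex1I[of _ u]) auto
  qed
  define U where "U s = (THE u. u \<in> {a..b} \<and> S u = s)" for s
  have U1: "U s \<in> {a..b} \<and> S (U s) = s" if "s \<in> {0..L}" for s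
    unfolding U_def by (rule theI'[OF Sex[OF that]])
  have Srange: "S u \<in> {0..L}" if "u \<in> {a..b}" for u
    using Smono[of a u] Smono[of u b] that S0 by (auto simp: L_def)
  have U2: "U (S u) = u" if "u \<in> {a..b}" for u
  proof -
    have "U (S u) \<in> {a..b} \<and> S (U (S u)) = S u" using U1 Srange that by blast
    then show ?thesis using Sex[OF Srange[OF that]] that by blast
  qed
  have Simg: "S ` {a..b} = {0..L}"
  proof
    show "S ` {a..b} \<subseteq> {0..L}" using Srange by auto
    show "{0..L} \<subseteq> S ` {a..b}"
    proof
      fix s assume "s \<in> {0..L}"
      then show "s \<in> S ` {a..b}" using U1[of s] by (metis image_eqI)
    qed
  qed
  have Uc: "continuous_on {0..L} U"
    using continuous_on_inv[OF Sc compact_Icc] U2 Simg by auto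
  have Ua: "U 0 = a" using U2[of a] S0 ab by simp
  have Ub: "U L = b" using U2[of b] ab by (simp add: L_def)
  have Uint: "U s \<in> {a<..<b}" if "s \<in> {0<..<L}" for s
  proof -
    have "U s \<in> {a..b}" "S (U s) = s" using U1 that by auto
    moreover have "U s \<noteq> a" using that S0 \<open>S (U s) = s\<close> by auto
    moreover have "U s \<noteq> b" using that \<open>S (U s) = s\<close> by (auto simp: L_def)
    ultimately show ?thesis by auto
  qed
  have Ud: "(U has_real_derivative inverse (T (U s))) (at s)" if s: "s \<in> {0<..<L}" for s
  proof (rule DERIV_inverse_function[where f = S and a = 0 and b = L])
    have "U s \<in> {a<..<b}" using Uint s .
    then show "(S has_real_derivative T (U s)) (at (U s))"
      using Sd[of "U s"] at_within_Icc_at[of a "U s" b] by auto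
    show "T (U s) \<noteq> 0" using Tp[of "U s"] Uint[OF s] by auto
    show "0 < s" "s < L" using s by auto
    show "S (U y) = y" if "0 < y" "y < L" for y using U1[of y] that by auto
    show "isCont U s"
      by (rule continuous_on_interior[OF Uc]) (use s in auto)
  qed
  have Pc: "continuous_on {a..b} P"
    by (rule DERIV_continuous_on, rule has_field_derivative_at_within, rule Pd)
  define cl where "cl s = max 0 (min L s)" for s
  have cl: "cl s \<in> {0..L}" for s using Lpos by (auto simp: cl_def)
  have clid: "cl s = s" if "s \<in> {0..L}" for s using that by (auto simp: cl_def)
  define \<theta> where "\<theta> s = \<alpha> + P (U (cl s))" for s
  have clc: "continuous_on UNIV cl" unfolding cl_def by (intro continuous_intros)
  have thc: "continuous_on UNIV \<theta>"
  proof -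
    have "continuous_on UNIV (\<lambda>s. U (cl s))"
      by (rule continuous_on_compose2[OF Uc clc]) (use cl in auto)
    then have "continuous_on UNIV (\<lambda>s. P (U (cl s)))"
      by (rule continuous_on_compose2[OF Pc]) (use cl U1 in auto)
    then show ?thesis unfolding \<theta>_def by (intro continuous_intros)
  qed
  have thL: "\<theta> s = \<alpha> + P (U s)" if "s \<in> {0..L}" for s using clid[OF that] by (simp add: \<theta>_def)
  have thr: "\<theta> s - \<alpha> \<in> {-\<alpha>..\<alpha>}" for s
    using Pr[of "U (cl s)"] U1[OF cl] by (simp add: \<theta>_def)
  have cosnn: "0 \<le> cos (\<theta> s - \<alpha>)" for s
    using thr[of s] al by (intro cos_ge_zero) auto
  define g where "g s = c * sqrt (cos (\<theta> s - \<alpha>))" for s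
  have gc: "continuous_on UNIV g" unfolding g_def
    by (intro continuous_intros continuous_on_compose2[OF continuous_on_real_sqrt]
         continuous_on_compose2[OF continuous_on_cos] thc) auto
  have gnn: "g s \<ge> 0" for s using c cosnn[of s] by (simp add: g_def)
  have th0: "\<theta> 0 = 0" using thL[of 0] Lpos Ua Pa by auto
  have thLv: "\<theta> L = 2 * \<alpha>" using thL[of L] Lpos Ub Pb by auto
  have thd: "(\<theta> has_real_derivative g s) (at s)" if s: "s \<in> {0<..<L}" for s
  proof -
    have u: "U s \<in> {a..b}" using Uint[OF s] by auto
    have d1: "((\<lambda>s. P (U s)) has_real_derivative P' (U s) * inverse (T (U s))) (at s)"
      by (rule DERIV_chain2[of P _ U s, OF Pd[OF u] Ud[OF s]])
    have "((\<lambda>s. \<alpha> + P (U s)) has_real_derivative 0 + P' (U s) * inverse (T (U s))) (at s)"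
      by (intro derivative_intros d1)
    moreover have "0 + P' (U s) * inverse (T (U s)) = g s"
      using rel[OF u] Tp[OF u] thL[of s] s by (simp add: g_def field_simps)
    ultimately have "((\<lambda>s. \<alpha> + P (U s)) has_real_derivative g s) (at s)" by simp
    then show ?thesis
      by (rule has_field_derivative_transform_within_open[where S = "{0<..<L}"])
         (use s thL in auto)
  qed
  have th_int: "\<theta> x = \<theta> 0 + integral {0..x} g" if x: "x \<in> {0..L}" for x
  proof -
    have "(g has_integral \<theta> x - \<theta> 0) {0..x}"
    proof (rule fundamental_theorem_of_calculus_interior)
      show "0 \<le> x" using x by auto
      show "continuous_on {0..x} \<theta>" using thc by (rule continuous_on_subset) auto
      show "(\<theta> has_vector_derivative g y) (at y)" if "y \<in> {0<..<x}" for y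
        using thd[of y] that x by (auto simp: has_real_derivative_iff_has_vector_derivative)
    qed
    then show ?thesis by (simp add: integral_unique)
  qed
  have gi: "f integrable_on {0..x}" if "continuous_on UNIV f" for f :: "real \<Rightarrow> real" and x
    by (rule integrable_continuous_real, rule continuous_on_subset[OF that]) auto
  define w where "w t = sqrt (cos (t - \<alpha>))" for t
  define K where "K = integral {0..2*\<alpha>} w"
  have wc: "continuous_on UNIV w" unfolding w_def
    by (intro continuous_intros continuous_on_compose2[OF continuous_on_real_sqrt]
         continuous_on_compose2[OF continuous_on_cos]) auto
  have chain: "integral {0..L} (\<lambda>s. w (\<theta> s) * g s) = K"
  proof -
    have "integral {0..L} (\<lambda>s. w (\<theta> s) * g s) = integral {\<theta> 0..\<theta> L} w"
      by (rule chain_H(2)[OF _ gi[OF gc] gnn th_int wc]) (use Lpos in auto)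
    then show ?thesis using th0 thLv by (simp add: K_def)
  qed
  have g2a: "(g s)\<^sup>2 = c * (w (\<theta> s) * g s)" for s by (simp add: g_def w_def power2_eq_square)
  have g2b: "(g s)\<^sup>2 = c\<^sup>2 * cos (\<theta> s - \<alpha>)" for s
    using cosnn[of s] by (simp add: g_def power_mult_distrib)
  have I2: "integral {0..L} (\<lambda>s. (g s)\<^sup>2) = c * K"
    using chain by (simp add: g2a)
  have cK': "K = 2 * sin \<alpha> * c"
  proof -
    have "sin \<alpha> > 0" using al by (intro sin_gt_zero) auto
    then show ?thesis using cK by (simp add: K_def w_def[abs_def] field_simps)
  qed
  have Icos: "integral {0..L} (\<lambda>s. cos (\<theta> s - \<alpha>)) = 2 * sin \<alpha>"
  proof -
    have "c * K = integral {0..L} (\<lambda>s. c\<^sup>2 * cos (\<theta> s - \<alpha>))" using I2 by (simp add: g2b)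
    also have "\<dots> = c\<^sup>2 * integral {0..L} (\<lambda>s. cos (\<theta> s - \<alpha>))" by simp
    finally show ?thesis using c cK' by (simp add: power2_eq_square)
  qed
  have gd: "(g has_real_derivative - (c\<^sup>2 / 2) * sin (\<theta> s - \<alpha>)) (at s)" if s: "s \<in> {0<..<L}" for s
  proof -
    have cp: "cos (\<theta> s - \<alpha>) > 0" using cpos[OF Uint[OF s]] thL[of s] s by auto
    have "((\<lambda>s. c * sqrt (cos (\<theta> s - \<alpha>))) has_real_derivative
          c * (inverse (sqrt (cos (\<theta> s - \<alpha>))) / 2 * (- sin (\<theta> s - \<alpha>) * (g s - 0)))) (at s)"
    proof -
      have e1: "((\<lambda>s. \<theta> s - \<alpha>) has_real_derivative g s - 0) (at s)"
        by (intro derivative_intros thd[OF s])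
      have e2: "((\<lambda>s. cos (\<theta> s - \<alpha>)) has_real_derivative - sin (\<theta> s - \<alpha>) * (g s - 0)) (at s)"
        by (rule DERIV_chain2[of cos _ "\<lambda>s. \<theta> s - \<alpha>" s, OF DERIV_cos e1])
      have e3: "((\<lambda>s. sqrt (cos (\<theta> s - \<alpha>))) has_real_derivative
          inverse (sqrt (cos (\<theta> s - \<alpha>))) / 2 * (- sin (\<theta> s - \<alpha>) * (g s - 0))) (at s)"
        by (rule DERIV_chain2[of sqrt _ "\<lambda>s. cos (\<theta> s - \<alpha>)" s, OF DERIV_real_sqrt[OF cp] e2])
      show ?thesis by (rule DERIV_cmult[OF e3])
    qed
    moreover have "c * (inverse (sqrt (cos (\<theta> s - \<alpha>))) / 2 * (- sin (\<theta> s - \<alpha>) * (g s - 0)))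
        = - (c\<^sup>2 / 2) * sin (\<theta> s - \<alpha>)"
      using cp by (simp add: g_def field_simps power2_eq_square)
    moreover have eqg: "g = (\<lambda>s. c * sqrt (cos (\<theta> s - \<alpha>)))" by (rule ext) (simp add: g_def)
    ultimately show ?thesis by metis
  qed
  have Isin: "integral {0..L} (\<lambda>s. sin (\<theta> s - \<alpha>)) = 0"
  proof -
    have "((\<lambda>s. - (c\<^sup>2 / 2) * sin (\<theta> s - \<alpha>)) has_integral g L - g 0) {0..L}"
    proof (rule fundamental_theorem_of_calculus_interior)
      show "0 \<le> L" using Lpos by auto
      show "continuous_on {0..L} g" using gc by (rule continuous_on_subset) auto
      show "(g has_vector_derivative - (c\<^sup>2 / 2) * sin (\<theta> y - \<alpha>)) (at y)" if "y \<in> {0<..<L}" for y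
        using gd[OF that] by (auto simp: has_real_derivative_iff_has_vector_derivative)
    qed
    moreover have "g L - g 0 = 0" using th0 thLv by (simp add: g_def)
    ultimately have "((\<lambda>s. - (c\<^sup>2 / 2) * sin (\<theta> s - \<alpha>)) has_integral 0) {0..L}" by simp
    then have "integral {0..L} (\<lambda>s. - (c\<^sup>2 / 2) * sin (\<theta> s - \<alpha>)) = 0" by (rule integral_unique)
    then have "- (c\<^sup>2 / 2) * integral {0..L} (\<lambda>s. sin (\<theta> s - \<alpha>)) = 0"
      by (simp only: integral_mult_right)
    then show ?thesis using c by simp
  qed
  have csc: "continuous_on UNIV (\<lambda>s. cos (\<theta> s - \<alpha>))" "continuous_on UNIV (\<lambda>s. sin (\<theta> s - \<alpha>))"
    by (intro continuous_intros continuous_on_compose2[OF continuous_on_cos] 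
        continuous_on_compose2[OF continuous_on_sin] thc; auto)+
  have LB: "(LBINT t=0..x. f t) = integral {0..x} f" if "continuous_on UNIV f" "0 \<le> x"
    for f :: "real \<Rightarrow> real" and x
  proof -
    have "set_integrable lborel {0..x} f"
      by (rule borel_integrable_atLeastAtMost', rule continuous_on_subset[OF that(1)]) auto
    from interval_integral_eq_integral[OF that(2) this] show ?thesis by (simp add: zero_ereal_def)
  qed
  have cth: "continuous_on UNIV (\<lambda>s. cos (\<theta> s))" "continuous_on UNIV (\<lambda>s. sin (\<theta> s))"
    by (intro continuous_intros continuous_on_compose2[OF continuous_on_cos] 
        continuous_on_compose2[OF continuous_on_sin] thc; auto)+
  have Icth: "integral {0..L} (\<lambda>s. cos (\<theta> s)) = sin (2 * \<alpha>)"
  proof -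
    have "integral {0..L} (\<lambda>s. cos (\<theta> s)) = integral {0..L} (\<lambda>s. cos \<alpha> * cos (\<theta> s - \<alpha>) - sin \<alpha> * sin (\<theta> s - \<alpha>))"
      by (rule integral_cong) (rule cos_shift)
    also have "\<dots> = cos \<alpha> * integral {0..L} (\<lambda>s. cos (\<theta> s - \<alpha>)) - sin \<alpha> * integral {0..L} (\<lambda>s. sin (\<theta> s - \<alpha>))"
      by (subst integral_diff) (auto intro!: integrable_on_mult_right[OF gi[OF csc(1)]] integrable_on_mult_right[OF gi[OF csc(2)]])
    also have "\<dots> = sin (2 * \<alpha>)" using Icos Isin by (simp add: sin_double)
    finally show ?thesis .
  qed
  have Isth: "integral {0..L} (\<lambda>s. sin (\<theta> s)) = 1 - cos (2 * \<alpha>)"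
  proof -
    have "integral {0..L} (\<lambda>s. sin (\<theta> s)) = integral {0..L} (\<lambda>s. sin \<alpha> * cos (\<theta> s - \<alpha>) + cos \<alpha> * sin (\<theta> s - \<alpha>))"
      by (rule integral_cong) (rule sin_shift)
    also have "\<dots> = sin \<alpha> * integral {0..L} (\<lambda>s. cos (\<theta> s - \<alpha>)) + cos \<alpha> * integral {0..L} (\<lambda>s. sin (\<theta> s - \<alpha>))"
      by (subst integral_add) (auto intro!: integrable_on_mult_right[OF gi[OF csc(1)]] integrable_on_mult_right[OF gi[OF csc(2)]])
    also have "\<dots> = 1 - cos (2 * \<alpha>)" using Icos Isin by (simp add: cos_double_sin power2_eq_square)
    finally show ?thesis .
  qed
  have g2c: "continuous_on UNIV (\<lambda>s. (g s)\<^sup>2)" by (intro continuous_intros gc)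
  have gm: "g \<in> borel_measurable lborel"
    using borel_measurable_continuous_onI[OF gc] by simp
  have adm: "admissible \<alpha> L \<theta> g"
    unfolding admissible_def H1_with_deriv_def
  proof (intro conjI ballI)
    show "g \<in> borel_measurable lborel" by (rule gm)
    show "set_integrable lborel {0..L} g"
      by (rule borel_integrable_atLeastAtMost', rule continuous_on_subset[OF gc]) auto
    show "set_integrable lborel {0..L} (\<lambda>t. (g t)\<^sup>2)"
      by (rule borel_integrable_atLeastAtMost', rule continuous_on_subset[OF g2c]) auto
    show "\<theta> x = \<theta> 0 + (LBINT t=0..x. g t)" if "x \<in> {0..L}" for x
      using th_int[OF that] LB[OF gc, of x] that by auto
    show "AE t in lborel. t \<in> {0..L} \<longrightarrow> 0 \<le> g t" using gnn by simp
    show "\<theta> 0 = 0" by (rule th0)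
    show "\<theta> L = 2 * \<alpha>" by (rule thLv)
    show "(LBINT u=0..L. cos (\<theta> u)) = sin (2 * \<alpha>)" using LB[OF cth(1), of L] Lpos Icth by simp
    show "(LBINT u=0..L. sin (\<theta> u)) = 1 - cos (2 * \<alpha>)" using LB[OF cth(2), of L] Lpos Isth by simp
  qed
  have en: "energy L g = c * K / 2"
    unfolding energy_def using LB[OF g2c, of L] Lpos I2 by simp
  show ?thesis using Lpos adm en by (auto simp: K_def w_def[abs_def])
qed



lemma Kpos:
  assumes al: "0 < \<alpha>" "\<alpha> \<le> pi/2"
  shows "integral {0..2*\<alpha>} (\<lambda>t. sqrt (cos (t - \<alpha>))) \<ge> 2 * sin \<alpha>"
proof -
  have hi: "((\<lambda>t. cos (t - \<alpha>)) has_integral sin (2*\<alpha> - \<alpha>) - sin (0 - \<alpha>)) {0..2*\<alpha>}"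
  proof (rule fundamental_theorem_of_calculus)
    show "0 \<le> 2 * \<alpha>" using al by simp
    fix x assume "x \<in> {0..2*\<alpha>}"
    have "((\<lambda>t. sin (t - \<alpha>)) has_real_derivative cos (x - \<alpha>) * (1 - 0)) (at x)"
      by (rule DERIV_chain2[of sin _ "\<lambda>t. t - \<alpha>" x, OF DERIV_sin]) (intro derivative_intros)
    then show "((\<lambda>t. sin (t - \<alpha>)) has_vector_derivative cos (x - \<alpha>)) (at x within {0..2*\<alpha>})"
      by (simp add: has_real_derivative_iff_has_vector_derivative has_vector_derivative_at_within)
  qed
  have "integral {0..2*\<alpha>} (\<lambda>t. cos (t - \<alpha>)) \<le> integral {0..2*\<alpha>} (\<lambda>t. sqrt (cos (t - \<alpha>)))"
  proof (rule integral_le)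
    show "(\<lambda>t. cos (t - \<alpha>)) integrable_on {0..2*\<alpha>}" using hi by blast
    show "(\<lambda>t. sqrt (cos (t - \<alpha>))) integrable_on {0..2*\<alpha>}"
      by (intro integrable_continuous_real continuous_intros
          continuous_on_compose2[OF continuous_on_real_sqrt] continuous_on_compose2[OF continuous_on_cos]) auto
    fix t assume t: "t \<in> {0..2*\<alpha>}"
    have c0: "0 \<le> cos (t - \<alpha>)" using t al by (intro cos_ge_zero) auto
    have "cos (t - \<alpha>) * cos (t - \<alpha>) \<le> cos (t - \<alpha>) * 1"
      by (rule mult_left_mono[OF cos_le_one c0])
    then have "(cos (t - \<alpha>))\<^sup>2 \<le> cos (t - \<alpha>)" by (simp add: power2_eq_square)
    then show "cos (t - \<alpha>) \<le> sqrt (cos (t - \<alpha>))" by (rule real_le_rsqrt)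
  qed
  moreover have "integral {0..2*\<alpha>} (\<lambda>t. cos (t - \<alpha>)) = 2 * sin \<alpha>"
    using integral_unique[OF hi] by simp
  ultimately show ?thesis by simp
qed

lemma competitor:
  assumes al: "0 < \<alpha>" "\<alpha> \<le> pi/2"
  defines "K \<equiv> integral {0..2*\<alpha>} (\<lambda>t. sqrt (cos (t - \<alpha>)))"
  shows "\<exists>L \<theta> g. L > 0 \<and> admissible \<alpha> L \<theta> g \<and> energy L g = K\<^sup>2 / (4 * sin \<alpha>)"
proof -
  have sa: "sin \<alpha> > 0" using al by (intro sin_gt_zero) auto
  define c where "c = K / (2 * sin \<alpha>)"
  have Kp: "K \<ge> 2 * sin \<alpha>" using Kpos[OF al] by (simp add: K_def)
  have c: "c > 0" using Kp sa by (simp add: c_def)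
  have cK: "c = integral {0..2*\<alpha>} (\<lambda>t. sqrt (cos (t - \<alpha>))) / (2 * sin \<alpha>)" by (simp add: c_def K_def)
  have en: "c * K / 2 = K\<^sup>2 / (4 * sin \<alpha>)" using sa by (simp add: c_def power2_eq_square)
  have "\<exists>L \<theta> g. L > 0 \<and> admissible \<alpha> L \<theta> g \<and> energy L g = c * K / 2"
  proof (cases "\<alpha> < pi/2")
    case True
    have cp: "cos u > 0" if "u \<in> {-\<alpha>..\<alpha>}" for u
      using that True al by (intro cos_gt_zero_pi) auto
    show ?thesis unfolding K_def
    proof (rule competitor_generic[where a = "-\<alpha>" and b = \<alpha> and P = "\<lambda>u. u" and P' = "\<lambda>u. 1"
          and T = "\<lambda>u. 1 / (c * sqrt (cos u))"])
      show "continuous_on {- \<alpha>..\<alpha>} (\<lambda>u. 1 / (c * sqrt (cos u)))"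
      proof -
        have cn: "cos u \<noteq> 0" if "-\<alpha> \<le> u" "u \<le> \<alpha>" for u using cp[of u] that by auto
        show ?thesis using cn c by (intro continuous_intros continuous_on_compose2[OF continuous_on_real_sqrt]) auto
      qed
      show "1 / (c * sqrt (cos u)) > 0" if "u \<in> {- \<alpha>..\<alpha>}" for u
        using cp[OF that] c by simp
      show "1 = c * sqrt (cos u) * (1 / (c * sqrt (cos u)))" if "u \<in> {- \<alpha>..\<alpha>}" for u
        using cp[OF that] c by simp
    qed (use al c cK cp in \<open>auto intro: DERIV_ident\<close>)
  next
    case False
    then have a2: "\<alpha> = pi/2" using al by simp
    define y where "y u = sin u / sqrt 2" for u
    have s2: "sqrt 2 > (1::real)" by simp
    have ylt: "\<bar>y u\<bar> < 1" for u
    proof -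
      have "\<bar>sin u\<bar> \<le> 1" by (rule abs_sin_le_one)
      then have "\<bar>sin u\<bar> < sqrt 2" using s2 by linarith
      then show ?thesis by (simp add: y_def abs_div divide_less_eq)
    qed
    have y2: "(y u)\<^sup>2 = (sin u)\<^sup>2 / 2" for u by (simp add: y_def power_divide)
    have sq1: "sqrt (1 - (y u)\<^sup>2) > 0" for u
      using ylt[of u] by (simp add: abs_square_less_1)
    define P where "P u = 2 * arcsin (y u)" for u
    define P' where "P' u = 2 * (inverse (sqrt (1 - (y u)\<^sup>2)) * (cos u / sqrt 2))" for u
    define T where "T u = 2 / (c * sqrt 2 * sqrt (1 - (y u)\<^sup>2))" for u
    have cosP: "cos (P u) = (cos u)\<^sup>2" for u
    proof -
      have "cos (P u) = 1 - 2 * (sin (arcsin (y u)))\<^sup>2" by (simp add: P_def cos_double_sin)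
      also have "sin (arcsin (y u)) = y u" using ylt[of u] by (intro sin_arcsin) auto
      finally show ?thesis by (simp add: y2 cos_squared_eq)
    qed
    have arc: "arcsin (1 / sqrt 2) = pi / 4"
    proof -
      have "1 / sqrt 2 = sin (pi/4)" by (simp add: sin_45 field_simps)
      then show ?thesis by (simp add: arcsin_sin)
    qed
    have i1': "1 / sqrt 2 \<le> (1::real)" using s2 by simp
    have am: "arcsin (- (1 / sqrt 2)) = - (pi/4)"
    proof -
      have "arcsin (- (1 / sqrt 2)) = - arcsin (1 / sqrt 2)"
        by (rule arcsin_minus) (use i1' in \<open>auto intro: order_trans[of _ 0]\<close>)
      then show ?thesis using arc by simp
    qed
    have ym: "y (pi/2) = 1 / sqrt 2" "y (- (pi/2)) = - (1 / sqrt 2)" by (auto simp: y_def)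
    show ?thesis unfolding K_def
    proof (rule competitor_generic[where a = "-(pi/2)" and b = "pi/2" and P = P and P' = P' and T = T])
      show "- (pi / 2) < pi / 2" by simp
      show "(P has_real_derivative P' u) (at u)" for u
      proof -
        have "((\<lambda>u. y u) has_real_derivative cos u / sqrt 2) (at u)"
          unfolding y_def by (rule DERIV_cdivide[OF DERIV_sin])
        then have "((\<lambda>u. arcsin (y u)) has_real_derivative inverse (sqrt (1 - (y u)\<^sup>2)) * (cos u / sqrt 2)) (at u)"
          using ylt[of u] by (intro DERIV_chain2[of arcsin _ y u, OF DERIV_arcsin]) auto
        then show ?thesis unfolding P_def[abs_def] P'_def by (rule DERIV_cmult)
      qed
      show "continuous_on {- (pi / 2)..pi / 2} T"
      proof -
        have ne: "(sin u / sqrt 2)\<^sup>2 \<noteq> 1" for u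
        proof -
          have "(y u)\<^sup>2 < 1" using ylt[of u] abs_square_less_1 by blast
          then show ?thesis by (simp add: y_def)
        qed
        show ?thesis unfolding T_def y_def using c ne
          by (intro continuous_intros continuous_on_compose2[OF continuous_on_real_sqrt]) auto
      qed
      show "T u > 0" for u using c sq1[of u] by (simp add: T_def)
      show "P' u = c * sqrt (cos (P u)) * T u" if "u \<in> {- (pi / 2)..pi / 2}" for u
      proof -
        have "0 \<le> cos u" using that by (intro cos_ge_zero) auto
        then have "sqrt (cos (P u)) = cos u" by (simp add: cosP)
        have r2: "cos u * sqrt 2 = cos u * 2 / sqrt 2"
          by (metis real_div_sqrt times_divide_eq_right zero_le_numeral)
        show ?thesis using c sq1[of u] \<open>sqrt (cos (P u)) = cos u\<close>
          by (simp add: P'_def T_def field_simps r2)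
      qed
      show "cos (P u) > 0" if "u \<in> {- (pi / 2)<..<pi / 2}" for u
      proof -
        have "0 < cos u" using that by (intro cos_gt_zero_pi) auto
        then show ?thesis by (simp add: cosP)
      qed
      show "P (- (pi / 2)) = - \<alpha>" using am ym a2 by (simp add: P_def)
      show "P (pi / 2) = \<alpha>" using arc ym a2 by (simp add: P_def)
      show "P u \<in> {- \<alpha>..\<alpha>}" if "u \<in> {- (pi / 2)..pi / 2}" for u
      proof -
        have yb: "\<bar>y u\<bar> \<le> 1 / sqrt 2" using abs_sin_le_one[of u] by (simp add: y_def abs_div divide_right_mono)
        have i1: "1 / sqrt 2 \<le> (1::real)" using s2 by simp
        have "arcsin (y u) \<le> arcsin (1 / sqrt 2)"
          using yb ylt[of u] i1' by (intro arcsin_le_arcsin) (auto simp: abs_le_iff abs_less_iff)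
        moreover have "arcsin (- (1 / sqrt 2)) \<le> arcsin (y u)"
          using yb i1 ylt[of u] by (intro arcsin_le_arcsin) (auto simp: abs_le_iff abs_less_iff)
        ultimately show ?thesis using arc am a2 by (auto simp: P_def)
      qed
    qed (use al c cK in auto)
  qed
  then show ?thesis using en by simp
qed



lemma LB_conv:
  fixes f :: "real \<Rightarrow> real"
  assumes "0 \<le> x" "set_integrable lborel {0..x} f"
  shows "(LBINT t=0..x. f t) = integral {0..x} f"
  using interval_integral_eq_integral[OF assms] by (simp add: zero_ereal_def)

lemma theta_props:
  fixes g \<theta> :: "real \<Rightarrow> real"
  assumes L: "0 \<le> L" and gi: "g integrable_on {0..L}" and gnn: "\<And>t. t \<in> {0..L} \<Longrightarrow> 0 \<le> g t"
    and th: "\<And>x. x \<in> {0..L} \<Longrightarrow> \<theta> x = \<theta> 0 + integral {0..x} g"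
  shows "continuous_on {0..L} \<theta>" "\<And>x y. 0 \<le> x \<Longrightarrow> x \<le> y \<Longrightarrow> y \<le> L \<Longrightarrow> \<theta> x \<le> \<theta> y"
proof -
  have gsub: "g integrable_on {x..y}" if "0 \<le> x" "y \<le> L" for x y
    using integrable_on_subinterval[OF gi] that by auto
  have "continuous_on {0..L} (\<lambda>x. \<theta> 0 + integral {0..x} g)"
    by (intro continuous_intros indefinite_integral_continuous_1 gi)
  then show "continuous_on {0..L} \<theta>" by (rule continuous_on_eq) (metis th)
  fix x y assume that: "0 \<le> x" "x \<le> y" "y \<le> L"
  have "integral {0..x} g + integral {x..y} g = integral {0..y} g"
    by (rule Henstock_Kurzweil_Integration.integral_combine) (use that gsub in auto)
  moreover have "\<theta> x = \<theta> 0 + integral {0..x} g" "\<theta> y = \<theta> 0 + integral {0..y} g"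
    by (intro th; use that in auto)+
  moreover have "0 \<le> integral {x..y} g" using that gsub gnn by (intro integral_nonneg) auto
  ultimately show "\<theta> x \<le> \<theta> y" by linarith
qed

lemma lower_eq:
  fixes \<theta> g :: "real \<Rightarrow> real"
  assumes al: "0 < \<alpha>" "\<alpha> \<le> pi/2" and L: "L > 0" and adm: "admissible \<alpha> L \<theta> g"
    and Kd: "K = integral {0..2*\<alpha>} (\<lambda>t. sqrt (cos (t - \<alpha>)))"
    and cd: "c = K / (2 * sin \<alpha>)"
    and le: "energy L g \<le> K\<^sup>2 / (4 * sin \<alpha>)"
  shows "\<And>x. x \<in> {0..L} \<Longrightarrow> \<theta> x = integral {0..x} (\<lambda>s. c * sqrt (cos (\<theta> s - \<alpha>)))"
    "continuous_on {0..L} \<theta>" "\<And>s. s \<in> {0..L} \<Longrightarrow> \<theta> s \<in> {0..2*\<alpha>}"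
    "integral {0..L} (\<lambda>s. cos (\<theta> s - \<alpha>)) = 2 * sin \<alpha>"
proof -
  have sa: "sin \<alpha> > 0" using al by (intro sin_gt_zero) auto
  from adm have gm: "g \<in> borel_measurable lborel" and gi: "set_integrable lborel {0..L} g"
    and g2i: "set_integrable lborel {0..L} (\<lambda>t. (g t)\<^sup>2)"
    and thI: "\<And>x. x \<in> {0..L} \<Longrightarrow> \<theta> x = \<theta> 0 + (LBINT t=0..x. g t)"
    and AEnn: "AE t in lborel. t \<in> {0..L} \<longrightarrow> g t \<ge> 0"
    and th0: "\<theta> 0 = 0" and thL: "\<theta> L = 2 * \<alpha>"
    and Ic: "(LBINT u=0..L. cos (\<theta> u)) = sin (2 * \<alpha>)"
    and Is: "(LBINT u=0..L. sin (\<theta> u)) = 1 - cos (2 * \<alpha>)"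
    unfolding admissible_def H1_with_deriv_def by auto
  define gt where "gt t = max 0 (g t)" for t
  have "AE t in lebesgue. t \<in> {0..L} \<longrightarrow> g t \<ge> 0" by (rule AE_completion[OF AEnn])
  then obtain N where N: "negligible N" "{t. \<not> (t \<in> {0..L} \<longrightarrow> g t \<ge> 0)} \<subseteq> N"
    unfolding eventually_ae_filter_negligible by blast
  have gtg: "gt t = g t" if "t \<in> {0..L} - N" for t using N(2) that by (auto simp: gt_def)
  have gtnn: "0 \<le> gt t" for t by (simp add: gt_def)
  have giH: "g integrable_on {0..L}" using set_borel_integral_eq_integral(1)[OF gi] .
  have gtiH: "gt integrable_on {0..L}" by (rule integrable_spike[OF giH N(1)]) (use gtg in auto)
  have g2iH: "(\<lambda>t. (g t)\<^sup>2) integrable_on {0..L}" using set_borel_integral_eq_integral(1)[OF g2i] .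
  have gt2iH: "(\<lambda>t. (gt t)\<^sup>2) integrable_on {0..L}" by (rule integrable_spike[OF g2iH N(1)]) (use gtg in auto)
  have thH: "\<theta> x = \<theta> 0 + integral {0..x} gt" if x: "x \<in> {0..L}" for x
  proof -
    have "set_integrable lborel {0..x} g" by (rule set_integrable_subset[OF gi]) (use x in auto)
    then have "(LBINT t=0..x. g t) = integral {0..x} g" using LB_conv x by auto
    also have "\<dots> = integral {0..x} gt" by (rule integral_spike[OF N(1)]) (use gtg x in auto)
    finally show ?thesis using thI[OF x] by simp
  qed
  have E2: "2 * energy L g = integral {0..L} (\<lambda>t. (gt t)\<^sup>2)"
  proof -
    have "(LBINT t=0..L. (g t)\<^sup>2) = integral {0..L} (\<lambda>t. (g t)\<^sup>2)" using LB_conv L g2i by auto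
    also have "\<dots> = integral {0..L} (\<lambda>t. (gt t)\<^sup>2)" by (rule integral_spike[OF N(1)]) (use gtg in auto)
    finally show ?thesis by (simp add: energy_def)
  qed
  have thc: "continuous_on {0..L} \<theta>" and thmo: "\<And>x y. 0 \<le> x \<Longrightarrow> x \<le> y \<Longrightarrow> y \<le> L \<Longrightarrow> \<theta> x \<le> \<theta> y"
    using theta_props[OF _ gtiH _ thH] L gtnn by auto
  then show "continuous_on {0..L} \<theta>" by simp
  have thr: "\<theta> s \<in> {0..2*\<alpha>}" if "s \<in> {0..L}" for s
    using thmo[of 0 s] thmo[of s L] that th0 thL by auto
  then show "\<And>s. s \<in> {0..L} \<Longrightarrow> \<theta> s \<in> {0..2*\<alpha>}" by simp
  have cosnn: "0 \<le> cos (\<theta> s - \<alpha>)" if "s \<in> {0..L}" for s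
    using thr[OF that] al by (intro cos_ge_zero) auto
  define w where "w t = sqrt (cos (t - \<alpha>))" for t
  have wc: "continuous_on UNIV w" unfolding w_def
    by (intro continuous_intros continuous_on_compose2[OF continuous_on_real_sqrt]
         continuous_on_compose2[OF continuous_on_cos]) auto
  have chain: "integral {0..L} (\<lambda>s. w (\<theta> s) * gt s) = K"
    and chi: "(\<lambda>s. w (\<theta> s) * gt s) integrable_on {0..L}"
  proof -
    show "integral {0..L} (\<lambda>s. w (\<theta> s) * gt s) = K"
      using chain_H(2)[OF _ gtiH _ thH wc] L gtnn th0 thL by (simp add: Kd w_def[abs_def])
    show "(\<lambda>s. w (\<theta> s) * gt s) integrable_on {0..L}"
      using chain_H(1)[OF _ gtiH _ thH wc] L gtnn by simp
  qed
  have ccont: "continuous_on {0..L} (\<lambda>s. cos (\<theta> s))" "continuous_on {0..L} (\<lambda>s. sin (\<theta> s))"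
    "continuous_on {0..L} (\<lambda>s. cos (\<theta> s - \<alpha>))"
    by (intro continuous_intros continuous_on_compose2[OF continuous_on_cos]
        continuous_on_compose2[OF continuous_on_sin] thc; auto)+
  have IcH: "integral {0..L} (\<lambda>s. cos (\<theta> s)) = sin (2 * \<alpha>)"
    using Ic LB_conv[of L "\<lambda>s. cos (\<theta> s)"] borel_integrable_atLeastAtMost'[OF ccont(1)] L by simp
  have IsH: "integral {0..L} (\<lambda>s. sin (\<theta> s)) = 1 - cos (2 * \<alpha>)"
    using Is LB_conv[of L "\<lambda>s. sin (\<theta> s)"] borel_integrable_atLeastAtMost'[OF ccont(2)] L by simp
  have ci: "(\<lambda>s. cos (\<theta> s)) integrable_on {0..L}" "(\<lambda>s. sin (\<theta> s)) integrable_on {0..L}"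
    "(\<lambda>s. cos (\<theta> s - \<alpha>)) integrable_on {0..L}"
    using ccont by (auto intro: integrable_continuous_real)
  have Icos: "integral {0..L} (\<lambda>s. cos (\<theta> s - \<alpha>)) = 2 * sin \<alpha>"
  proof -
    have "integral {0..L} (\<lambda>s. cos (\<theta> s - \<alpha>)) = integral {0..L} (\<lambda>s. cos \<alpha> * cos (\<theta> s) + sin \<alpha> * sin (\<theta> s))"
      by (rule integral_cong) (simp add: cos_diff mult.commute)
    also have "\<dots> = cos \<alpha> * integral {0..L} (\<lambda>s. cos (\<theta> s)) + sin \<alpha> * integral {0..L} (\<lambda>s. sin (\<theta> s))"
      by (subst integral_add) (auto intro!: integrable_on_mult_right ci)
    also have "\<dots> = 2 * sin \<alpha>"
    proof -
      have "cos \<alpha> * sin (2 * \<alpha>) + sin \<alpha> * (1 - cos (2 * \<alpha>)) = 2 * sin \<alpha>"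
        unfolding sin_double cos_double_sin using sin_cos_squared_add[of \<alpha>] by algebra
      then show ?thesis using IcH IsH by simp
    qed
    finally show ?thesis .
  qed
  then show "integral {0..L} (\<lambda>s. cos (\<theta> s - \<alpha>)) = 2 * sin \<alpha>" .
  define h where "h s = c * w (\<theta> s)" for s
  define f where "f s = (gt s - h s)\<^sup>2" for s
  have fexp: "f s = (gt s)\<^sup>2 - 2 * c * (w (\<theta> s) * gt s) + c\<^sup>2 * cos (\<theta> s - \<alpha>)" if "s \<in> {0..L}" for s
  proof -
    have "(w (\<theta> s))\<^sup>2 = cos (\<theta> s - \<alpha>)" using cosnn[OF that] by (simp add: w_def)
    then show ?thesis by (simp add: f_def h_def power2_eq_square algebra_simps)
  qed
  have fi: "f integrable_on {0..L}"
  proof -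
    have "(\<lambda>s. (gt s)\<^sup>2 - 2 * c * (w (\<theta> s) * gt s) + c\<^sup>2 * cos (\<theta> s - \<alpha>)) integrable_on {0..L}"
      by (intro integrable_add integrable_diff integrable_on_mult_right gt2iH chi ci)
    then show ?thesis by (rule integrable_spike[where S = "{}"]) (use fexp in auto)
  qed
  have fint: "integral {0..L} f = 2 * energy L g - 2 * c * K + c\<^sup>2 * (2 * sin \<alpha>)"
  proof -
    have "integral {0..L} f = integral {0..L} (\<lambda>s. (gt s)\<^sup>2 - 2 * c * (w (\<theta> s) * gt s) + c\<^sup>2 * cos (\<theta> s - \<alpha>))"
      by (rule integral_cong) (rule fexp)
    also have "\<dots> = integral {0..L} (\<lambda>s. (gt s)\<^sup>2) - 2 * c * integral {0..L} (\<lambda>s. w (\<theta> s) * gt s)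
        + c\<^sup>2 * integral {0..L} (\<lambda>s. cos (\<theta> s - \<alpha>))"
      by (subst integral_add integral_diff, (intro integrable_add integrable_diff integrable_on_mult_right gt2iH chi ci)+)+
         simp
    finally show ?thesis using E2 chain Icos by simp
  qed
  have "integral {0..L} f \<le> 0"
  proof -
    have "2 * energy L g - 2 * c * K + c\<^sup>2 * (2 * sin \<alpha>) = 2 * energy L g - K\<^sup>2 / (2 * sin \<alpha>)"
      using sa by (simp add: cd power2_eq_square field_simps)
    then have "integral {0..L} f = 2 * energy L g - K\<^sup>2 / (2 * sin \<alpha>)" using fint by linarith
    moreover have "K\<^sup>2 / (4 * sin \<alpha>) * 2 = K\<^sup>2 / (2 * sin \<alpha>)" by simp
    ultimately show ?thesis using le by linarith
  qed
  moreover have "0 \<le> integral {0..L} f" by (rule integral_nonneg[OF fi]) (simp add: f_def)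
  ultimately have f0: "integral {0..L} f = 0" by simp
  have fabs: "f absolutely_integrable_on {0..L}"
    by (rule nonnegative_absolutely_integrable_1[OF fi]) (simp add: f_def)
  have "(LINT x:{0..L}|lebesgue. f x) = 0"
    using set_lebesgue_integral_eq_integral(2)[OF fabs] f0 by simp
  then have "integral\<^sup>L lebesgue (\<lambda>x. indicator {0..L} x *\<^sub>R f x) = 0"
    by (simp add: set_lebesgue_integral_def)
  moreover have "integrable lebesgue (\<lambda>x. indicator {0..L} x *\<^sub>R f x)"
    using fabs by (simp add: set_integrable_def)
  ultimately have "AE x in lebesgue. indicator {0..L} x *\<^sub>R f x = 0"
    by (subst (asm) integral_nonneg_eq_0_iff_AE) (auto simp: f_def)
  then obtain N2 where N2: "negligible N2" "{x. \<not> indicator {0..L} x *\<^sub>R f x = 0} \<subseteq> N2"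
    unfolding eventually_ae_filter_negligible by blast
  have gth: "gt x = h x" if "x \<in> {0..L} - N2" for x
  proof -
    have "indicator {0..L} x *\<^sub>R f x = 0" using N2(2) that by blast
    then have "f x = 0" using that by simp
    then show ?thesis by (simp add: f_def)
  qed
  show "\<theta> x = integral {0..x} (\<lambda>s. c * sqrt (cos (\<theta> s - \<alpha>)))" if x: "x \<in> {0..L}" for x
  proof -
    have "integral {0..x} gt = integral {0..x} h"
      by (rule integral_spike[OF N2(1)]) (use gth x in auto)
    then show ?thesis using thH[OF x] th0 by (simp add: h_def[abs_def] w_def[abs_def])
  qed
qed



lemma K2C:
  assumes al: "0 < \<alpha>" "\<alpha> \<le> pi/2"
  shows "integral {0..2*\<alpha>} (\<lambda>t. sqrt (cos (t - \<alpha>))) = 2 * (LBINT t=0..\<alpha>. sqrt (cos t))"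
proof -
  define f where "f t = sqrt (cos t)" for t
  have fc: "continuous_on A f" for A unfolding f_def
    by (intro continuous_intros continuous_on_compose2[OF continuous_on_real_sqrt]
         continuous_on_compose2[OF continuous_on_cos]) auto
  have "integral {0..2*\<alpha>} (f \<circ> (\<lambda>x. x + - \<alpha>)) = integral {0 + - \<alpha>..2*\<alpha> + - \<alpha>} f"
    by (rule integral_shift[OF fc])
  then have 1: "integral {0..2*\<alpha>} (\<lambda>t. sqrt (cos (t - \<alpha>))) = integral {-\<alpha>..\<alpha>} f"
    by (simp add: f_def o_def)
  have 2: "integral {-\<alpha>..0} f + integral {0..\<alpha>} f = integral {-\<alpha>..\<alpha>} f"
    by (rule Henstock_Kurzweil_Integration.integral_combine) (use al fc in \<open>auto intro: integrable_continuous_real\<close>)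
  have "integral (cbox (- \<alpha>) (- 0)) (\<lambda>x. f (- x)) = integral (cbox 0 \<alpha>) f"
    by (rule integral_reflect)
  moreover have "(\<lambda>x. f (- x)) = f" by (simp add: f_def fun_eq_iff)
  ultimately have 3: "integral {-\<alpha>..0} f = integral {0..\<alpha>} f" by simp
  have 4: "(LBINT t=0..\<alpha>. sqrt (cos t)) = integral {0..\<alpha>} f"
    using LB_conv[of \<alpha> f] borel_integrable_atLeastAtMost'[OF fc] al by (simp add: f_def[abs_def])
  show ?thesis using 1 2 3 4 by simp
qed

theorem mainTheorem8:
  fixes \<alpha> L :: real and \<theta> :: "real \<Rightarrow> real"
  assumes "\<alpha> \<in> {0<..pi/2}"
    and "is_minimizer \<alpha> L \<theta>"
    and "\<exists>d0. (\<theta> has_real_derivative d0) (at 0 within {0..L}) \<and> d0 \<le> 1"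
    and "\<exists>dL. (\<theta> has_real_derivative dL) (at L within {0..L}) \<and> dL \<le> 1"
  shows "\<exists>d. (\<forall>s\<in>{0..L}. (\<theta> has_real_derivative d s) (at s within {0..L}))
           \<and> d 0 = d L
           \<and> (\<forall>s\<in>{0..L}. (1/2) * (d s)\<^sup>2 =
                 (1 / (2 * (sin \<alpha>)\<^sup>2)) * (LBINT t=0..\<alpha>. sqrt (cos t))\<^sup>2 * cos (\<theta> s - \<alpha>))
           \<and> energy L d = (1 / sin \<alpha>) * (LBINT t=0..\<alpha>. sqrt (cos t))\<^sup>2"
proof -
  have al: "0 < \<alpha>" "\<alpha> \<le> pi/2" using assms(1) by auto
  have sa: "sin \<alpha> > 0" using al by (intro sin_gt_zero) auto
  define K where "K = integral {0..2*\<alpha>} (\<lambda>t. sqrt (cos (t - \<alpha>)))"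
  define C where "C = (LBINT t=0..\<alpha>. sqrt (cos t))"
  define c where "c = K / (2 * sin \<alpha>)"
  have KC: "K = 2 * C" using K2C[OF al] by (simp add: K_def C_def)
  have cC: "c = C / sin \<alpha>" by (simp add: c_def KC)
  obtain g where L: "L > 0" and adm: "admissible \<alpha> L \<theta> g"
    and mn: "\<And>L' \<theta>' g'. L' > 0 \<Longrightarrow> admissible \<alpha> L' \<theta>' g' \<Longrightarrow> energy L g \<le> energy L' g'"
    using assms(2) unfolding is_minimizer_def by blast
  obtain L' \<theta>' g' where "L' > 0" "admissible \<alpha> L' \<theta>' g'" "energy L' g' = K\<^sup>2 / (4 * sin \<alpha>)"
    using competitor[OF al] unfolding K_def by blast
  then have le: "energy L g \<le> K\<^sup>2 / (4 * sin \<alpha>)" using mn by metis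
  note LE = lower_eq[OF al L adm K_def c_def le]
  define d where "d s = c * sqrt (cos (\<theta> s - \<alpha>))" for s
  have thc: "continuous_on {0..L} \<theta>" by (rule LE(2))
  have dc: "continuous_on {0..L} d" unfolding d_def
    by (intro continuous_intros continuous_on_compose2[OF continuous_on_real_sqrt]
         continuous_on_compose2[OF continuous_on_cos] thc) auto
  have thI: "\<theta> x = integral {0..x} d" if "x \<in> {0..L}" for x
    using LE(1)[OF that] by (simp add: d_def[abs_def])
  have cosnn: "0 \<le> cos (\<theta> s - \<alpha>)" if "s \<in> {0..L}" for s
    using LE(3)[OF that] al by (intro cos_ge_zero) auto
  have th0: "\<theta> 0 = 0" and thL: "\<theta> L = 2 * \<alpha>" using adm by (auto simp: admissible_def)
  show ?thesis
  proof (intro exI[of _ d] conjI ballI)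
    fix s assume s: "s \<in> {0..L}"
    have "((\<lambda>x. integral {0..x} d) has_real_derivative d s) (at s within {0..L})"
      by (rule integral_has_real_derivative[OF dc s])
    then show "(\<theta> has_real_derivative d s) (at s within {0..L})"
      by (rule has_field_derivative_transform_within[where d = 1]) (use s thI in auto)
  next
    show "d 0 = d L" using th0 thL by (simp add: d_def)
  next
    fix s assume s: "s \<in> {0..L}"
    have "(d s)\<^sup>2 = c\<^sup>2 * cos (\<theta> s - \<alpha>)" using cosnn[OF s] by (simp add: d_def power_mult_distrib)
    then show "(1/2) * (d s)\<^sup>2 = (1 / (2 * (sin \<alpha>)\<^sup>2)) * (LBINT t=0..\<alpha>. sqrt (cos t))\<^sup>2 * cos (\<theta> s - \<alpha>)"
      by (simp add: cC C_def power_divide)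
  next
    have d2: "(d s)\<^sup>2 = c\<^sup>2 * cos (\<theta> s - \<alpha>)" if "s \<in> {0..L}" for s
      using cosnn[OF that] by (simp add: d_def power_mult_distrib)
    have d2c: "continuous_on {0..L} (\<lambda>s. (d s)\<^sup>2)" by (intro continuous_intros dc)
    have "(LBINT s=0..L. (d s)\<^sup>2) = integral {0..L} (\<lambda>s. (d s)\<^sup>2)"
      using LB_conv[of L "\<lambda>s. (d s)\<^sup>2"] borel_integrable_atLeastAtMost'[OF d2c] L by simp
    also have "\<dots> = integral {0..L} (\<lambda>s. c\<^sup>2 * cos (\<theta> s - \<alpha>))" by (rule integral_cong) (rule d2)
    also have "\<dots> = c\<^sup>2 * (2 * sin \<alpha>)" using LE(4) by simp
    finally show "energy L d = (1 / sin \<alpha>) * (LBINT t=0..\<alpha>. sqrt (cos t))\<^sup>2"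
      using sa by (simp add: energy_def cC C_def power2_eq_square)
  qed
qed


end
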